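(* Let $m\ge1$, $n\ge1$, $N>2n$, and let $\mathbf y$ be a stationary reciprocal process of order $n$ on $\mathbb Z_N$, with conjugate process $\mathbf d(t)=\mathbf y(t)-\hat{\mathbb E}[\mathbf y(t)\mid\mathbf y(s),s\ne t]$ and $\Delta=\mathbb E\,\mathbf d(t)\mathbf d(t)^\top$. Then $\mathbf y$ is full rank if and only if $\Delta$ is positive definite.
   Context: A process on $\mathbb Z_N$ is a zero-mean second-order $\mathbb R^m$-valued process $\{\mathbf y(t)\}_{t=1}^N$, time indices taken modulo $N$, whose covariance $\boldsymbol\Sigma_N=\mathbb E\,\mathbf y\mathbf y^\top$ is symmetric block-circulant (its $(i,j)$ block depends only on $(i-j)\bmod N$); such a process is stationary, and $\Delta$ does not depend on $t$. Full rank means $\boldsymbol\Sigma_N>0$. $\hat{\mathbb E}[\cdot\mid\cdot]$ is orthogonal projection onto the closed linear span of the scalar components of the conditioning variables. Subspaces $\mathcal A,\mathcal B$ are conditionally orthogonal given $\mathcal C$ if $a-\hat{\mathbb E}[a\mid\mathcal C]$ and $b-\hat{\mathbb E}[b\mid\mathcal C]$ are uncorrelated for all $a\in\mathcal A,b\in\mathcal B$. The process is reciprocal of order $n$ if for every cyclic interval $(t_1,t_2)$ the variables $\{\mathbf y(t):t\in(t_1,t_2)\}$ are conditionally orthogonal to $\{\mathbf y(s):s\notin(t_1,t_2)\}$ given $\mathbf y(t_1-n+1),\dots,\mathbf y(t_1),\mathbf y(t_2),\dots,\mathbf y(t_2+n-1)$. *)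

theory Defs
  imports "HOL-Analysis.Analysis"
begin

text \<open>A zero-mean second-order R^m-valued process on Z_N is modelled abstractly by
  its scalar components y t i (t < N, i < m) as elements of a real inner product
  space (the Hilbert space of zero-mean finite-variance random variables), with
  E[u v] = inner u v.\<close>

definition zmod :: "nat \<Rightarrow> int \<Rightarrow> nat" where
  "zmod N t = nat (t mod int N)"

definition comps :: "nat \<Rightarrow> (nat \<Rightarrow> nat \<Rightarrow> 'h) \<Rightarrow> nat set \<Rightarrow> 'h set" where
  "comps m y T = {y t i | t i. t \<in> T \<and> i < m}"

definition proj :: "'h::real_inner set \<Rightarrow> 'h \<Rightarrow> 'h" where
  "proj S x = (SOME p. p \<in> span S \<and> (\<forall>s\<in>S. inner (x - p) s = 0))"

definition cond_orth :: "'h::real_inner set \<Rightarrow> 'h set \<Rightarrow> 'h set \<Rightarrow> bool" where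
  "cond_orth A B C \<longleftrightarrow>
     (\<forall>a\<in>span A. \<forall>b\<in>span B. inner (a - proj C a) (b - proj C b) = 0)"

definition stationary :: "nat \<Rightarrow> nat \<Rightarrow> (nat \<Rightarrow> nat \<Rightarrow> 'h::real_inner) \<Rightarrow> bool" where
  "stationary N m y \<longleftrightarrow>
     (\<forall>t s t' s'. t < N \<and> s < N \<and> t' < N \<and> s' < N \<and>
        zmod N (int t - int s) = zmod N (int t' - int s') \<longrightarrow>
        (\<forall>i<m. \<forall>j<m. inner (y t i) (y s j) = inner (y t' i) (y s' j)))"

text \<open>Cyclic open interval (t1,t2) = {t1+1, ..., t2-1} mod N (empty if t2 = t1).\<close>
definition cyc_interval :: "nat \<Rightarrow> nat \<Rightarrow> nat \<Rightarrow> nat set" where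
  "cyc_interval N t1 t2 =
     {zmod N (int t1 + int k) | k. 0 < k \<and> k < zmod N (int t2 - int t1)}"

definition boundary :: "nat \<Rightarrow> nat \<Rightarrow> nat \<Rightarrow> nat \<Rightarrow> nat set" where
  "boundary N n t1 t2 =
     {zmod N (int t1 - int k) | k. k < n} \<union> {zmod N (int t2 + int k) | k. k < n}"

definition reciprocal :: "nat \<Rightarrow> nat \<Rightarrow> nat \<Rightarrow> (nat \<Rightarrow> nat \<Rightarrow> 'h::real_inner) \<Rightarrow> bool" where
  "reciprocal N m n y \<longleftrightarrow>
     (\<forall>t1<N. \<forall>t2<N.
        cond_orth (comps m y (cyc_interval N t1 t2))
                  (comps m y ({0..<N} - cyc_interval N t1 t2))
                  (comps m y (boundary N n t1 t2)))"

definition full_rank :: "nat \<Rightarrow> nat \<Rightarrow> (nat \<Rightarrow> nat \<Rightarrow> 'h::real_inner) \<Rightarrow> bool" where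
  "full_rank N m y \<longleftrightarrow>
     (\<forall>c :: nat \<Rightarrow> nat \<Rightarrow> real. (\<exists>t<N. \<exists>i<m. c t i \<noteq> 0) \<longrightarrow>
        (\<Sum>t<N. \<Sum>i<m. \<Sum>s<N. \<Sum>j<m. c t i * c s j * inner (y t i) (y s j)) > 0)"

definition conj_proc :: "nat \<Rightarrow> nat \<Rightarrow> (nat \<Rightarrow> nat \<Rightarrow> 'h::real_inner) \<Rightarrow> nat \<Rightarrow> nat \<Rightarrow> 'h" where
  "conj_proc N m y t i = y t i - proj (comps m y ({0..<N} - {t})) (y t i)"

text \<open>Delta = E d(t) d(t)^T, taken at t = 0 (independent of t by stationarity).\<close>
definition Delta :: "nat \<Rightarrow> nat \<Rightarrow> (nat \<Rightarrow> nat \<Rightarrow> 'h::real_inner) \<Rightarrow> nat \<Rightarrow> nat \<Rightarrow> real" where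
  "Delta N m y i j = inner (conj_proc N m y 0 i) (conj_proc N m y 0 j)"

definition pos_def :: "nat \<Rightarrow> (nat \<Rightarrow> nat \<Rightarrow> real) \<Rightarrow> bool" where
  "pos_def m A \<longleftrightarrow>
     (\<forall>c :: nat \<Rightarrow> real. (\<exists>i<m. c i \<noteq> 0) \<longrightarrow> (\<Sum>i<m. \<Sum>j<m. c i * c j * A i j) > 0)"

end

theory Submission
  imports Defs
begin

lemma proj_exists_aux:
  fixes S :: "'h::real_inner set"
  assumes "finite S"
  shows "\<forall>x. \<exists>p. p \<in> span S \<and> (\<forall>s\<in>S. inner (x - p) s = 0)"
  using assms
proof (induction S)
  case empty
  then show ?case by (auto intro: span_zero)
next
  case (insert a S)
  show ?case
  proof
    fix x
    obtain pa where pa: "pa \<in> span S" "\<forall>s\<in>S. inner (a - pa) s = 0" using insert.IH by blast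
    obtain px where px: "px \<in> span S" "\<forall>s\<in>S. inner (x - px) s = 0" using insert.IH by blast
    have ortx: "inner (x - px) w = 0" if "w \<in> span S" for w
      using orthogonal_to_span[OF that, of "x - px"] px(2) by (simp add: orthogonal_def)
    have orta: "inner (a - pa) w = 0" if "w \<in> span S" for w
      using orthogonal_to_span[OF that, of "a - pa"] pa(2) by (simp add: orthogonal_def)
    have sub: "span S \<subseteq> span (insert a S)" by (simp add: span_mono subset_insertI)
    define r where "r = a - pa"
    show "\<exists>p. p \<in> span (insert a S) \<and> (\<forall>s\<in>insert a S. inner (x - p) s = 0)"
    proof (cases "r = 0")
      case True
      then have "a = pa" by (simp add: r_def)
      then show ?thesis using px ortx pa sub by auto
    next
      case False
      define k where "k = inner (x - px) r / inner r r"
      have rr: "inner r r \<noteq> 0" using False by simp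
      have rspan: "r \<in> span (insert a S)"
        unfolding r_def by (meson in_mono insertI1 pa(1) span_base span_diff sub)
      have p'span: "px + k *\<^sub>R r \<in> span (insert a S)"
        using rspan px(1) sub by (meson in_mono span_add span_mul)
      have "\<forall>s\<in>S. inner (x - (px + k *\<^sub>R r)) s = 0"
        using px(2) pa(2) by (simp add: r_def inner_diff_left inner_add_left)
      moreover have "inner (x - (px + k *\<^sub>R r)) a = 0"
      proof -
        have a: "a = r + pa" by (simp add: r_def)
        have "inner (x - (px + k *\<^sub>R r)) a = inner (x - px) r + inner (x-px) pa - k * inner r r - k * inner r pa"
          unfolding a by (simp add: inner_diff_left inner_add_right inner_add_left algebra_simps)
        also have "\<dots> = 0" using ortx[OF pa(1)] orta[OF pa(1)] rr by (simp add: k_def r_def)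
        finally show ?thesis .
      qed
      ultimately show ?thesis using p'span by auto
    qed
  qed
qed

lemma proj_props:
  fixes S :: "'h::real_inner set"
  assumes "finite S"
  shows "proj S x \<in> span S" "\<And>w. w \<in> span S \<Longrightarrow> inner (x - proj S x) w = 0"
proof -
  have "\<exists>p. p \<in> span S \<and> (\<forall>s\<in>S. inner (x - p) s = 0)" using proj_exists_aux[OF assms] by blast
  then have h: "proj S x \<in> span S \<and> (\<forall>s\<in>S. inner (x - proj S x) s = 0)"
    unfolding proj_def by (rule someI_ex)
  then show "proj S x \<in> span S" by blast
  fix w assume "w \<in> span S"
  then show "inner (x - proj S x) w = 0"
    using orthogonal_to_span[of w S "x - proj S x"] h by (simp add: orthogonal_def)
qed

lemma span_comps:
  fixes y :: "nat \<Rightarrow> nat \<Rightarrow> 'h::real_inner"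
  assumes finite_T: "finite T" and "x \<in> span (comps m y T)"
  shows "\<exists>a. x = (\<Sum>t\<in>T. \<Sum>i<m. a t i *\<^sub>R y t i)"
proof -
  let ?V = "{x. \<exists>a. x = (\<Sum>t\<in>T. \<Sum>i<m. a t i *\<^sub>R y t i)}"
  have "subspace ?V"
    unfolding subspace_def
  proof (intro conjI ballI allI)
    show "0 \<in> ?V" by (rule CollectI, rule exI[of _ "\<lambda>_ _. 0"]) simp
    fix u v assume "u \<in> ?V" "v \<in> ?V"
    then obtain a b where "u = (\<Sum>t\<in>T. \<Sum>i<m. a t i *\<^sub>R y t i)" "v = (\<Sum>t\<in>T. \<Sum>i<m. b t i *\<^sub>R y t i)" by blast
    then show "u + v \<in> ?V"
      by (intro CollectI exI[of _ "\<lambda>t i. a t i + b t i"]) (simp add: sum.distrib scaleR_add_left)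
  next
    fix c :: real and u assume "u \<in> ?V"
    then obtain a where "u = (\<Sum>t\<in>T. \<Sum>i<m. a t i *\<^sub>R y t i)" by blast
    then show "c *\<^sub>R u \<in> ?V"
      by (intro CollectI exI[of _ "\<lambda>t i. c * a t i"]) (simp add: scaleR_sum_right)
  qed
  moreover have "comps m y T \<subseteq> ?V"
  proof
    fix z assume "z \<in> comps m y T"
    then obtain t i where ti: "t \<in> T" "i < m" "z = y t i" unfolding comps_def by blast
    have e: "(\<Sum>i'<m. (if t' = t \<and> i' = i then 1 else 0) *\<^sub>R y t' i') = (if t' = t then y t i else 0)" for t'
    proof (cases "t' = t")
      case True
      have "(\<Sum>i'<m. (if t' = t \<and> i' = i then 1 else 0) *\<^sub>R y t' i') = (\<Sum>i'<m. if i' = i then y t i' else 0)"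
        using True by (intro sum.cong) auto
      also have "\<dots> = y t i" using ti(2) by (simp add: sum.delta)
      finally show ?thesis using True by simp
    qed auto
    have "(\<Sum>t'\<in>T. \<Sum>i'<m. (if t' = t \<and> i' = i then 1 else 0) *\<^sub>R y t' i') = y t i"
      unfolding e using ti(1) sum.delta[of T t "\<lambda>_. y t i"] by (simp add: finite_T)
    then show "z \<in> ?V" using ti by (intro CollectI exI[of _ "\<lambda>t' i'. if t' = t \<and> i' = i then 1 else 0"]) simp
  qed
  ultimately have "span (comps m y T) \<subseteq> ?V" by (rule span_minimal[rotated])
  then show ?thesis using assms(2) by blast
qed

lemma quad_eq:
  fixes y :: "nat \<Rightarrow> nat \<Rightarrow> 'h::real_inner"
  shows "(\<Sum>t<N. \<Sum>i<m. \<Sum>s<N. \<Sum>j<m. c t i * c s j * inner (y t i) (y s j))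
     = inner (\<Sum>t<N. \<Sum>i<m. c t i *\<^sub>R y t i) (\<Sum>t<N. \<Sum>i<m. c t i *\<^sub>R y t i)"
  by (simp only: inner_sum_left inner_sum_right inner_scaleR_left inner_scaleR_right sum_distrib_left mult.assoc) (simp add: inner_commute)

lemma quad_eq1:
  fixes d :: "nat \<Rightarrow> 'h::real_inner"
  shows "(\<Sum>i<m. \<Sum>j<m. c i * c j * inner (d i) (d j))
     = inner (\<Sum>i<m. c i *\<^sub>R d i) (\<Sum>i<m. c i *\<^sub>R d i)"
  by (simp only: inner_sum_left inner_sum_right inner_scaleR_left inner_scaleR_right sum_distrib_left mult.assoc) (simp add: inner_commute)

lemma sum_shift:
  fixes h :: "nat \<Rightarrow> real" and N k :: nat
  assumes "k < N"
  shows "(\<Sum>t<N. h ((t + k) mod N)) = (\<Sum>t<N. (h t :: real))"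
proof (rule sum.reindex_bij_witness[where i = "\<lambda>t. (t + (N - k)) mod N" and j = "\<lambda>t. (t + k) mod N"])
  fix a assume a: "a \<in> {..<N}"
  then show "((a + k) mod N + (N - k)) mod N = a" using assms
    by (metis add.assoc le_add_diff_inverse lessThan_iff less_imp_le_nat mod_add_left_eq mod_add_self2 mod_less)
  show "(a + k) mod N \<in> {..<N}" using a by auto
next
  fix a assume a: "a \<in> {..<N}"
  then show "((a + (N - k)) mod N + k) mod N = a" using assms
    by (metis add.assoc le_add_diff_inverse2 lessThan_iff less_imp_le_nat mod_add_left_eq mod_add_self2 mod_less)
  show "(a + (N - k)) mod N \<in> {..<N}" using a by auto
qed auto

lemma zmod_shift:
  assumes "0 < N"
  shows "zmod N (int ((t + k) mod N) - int ((s + k) mod N)) = zmod N (int t - int s)"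
proof -
  have "(int ((t + k) mod N) - int ((s + k) mod N)) mod int N = (int (t + k) - int (s + k)) mod int N"
    by (simp add: of_nat_mod mod_diff_eq)
  then show ?thesis unfolding zmod_def by simp
qed

lemma quad_shift:
  fixes y :: "nat \<Rightarrow> nat \<Rightarrow> 'h::real_inner"
  assumes st: "stationary N m y" and k: "k < N"
  shows "(\<Sum>t<N. \<Sum>i<m. \<Sum>s<N. \<Sum>j<m. c ((t + k) mod N) i * c ((s + k) mod N) j * inner (y t i) (y s j))
     = (\<Sum>t<N. \<Sum>i<m. \<Sum>s<N. \<Sum>j<m. c t i * c s j * inner (y t i) (y s j))"
proof -
  define G where "G t s = (\<Sum>i<m. \<Sum>j<m. c t i * c s j * inner (y t i) (y s j))" for t s
  have N: "0 < N" using k by simp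
  have swap: "(\<Sum>t<N. \<Sum>i<m. \<Sum>s<N. \<Sum>j<m. f t i s j) = (\<Sum>t<N. \<Sum>s<N. \<Sum>i<m. \<Sum>j<m. f t i s j)" for f :: "nat \<Rightarrow> nat \<Rightarrow> nat \<Rightarrow> nat \<Rightarrow> real"
    by (rule sum.cong[OF refl], rule sum.swap)
  have "(\<Sum>t<N. \<Sum>i<m. \<Sum>s<N. \<Sum>j<m. c ((t + k) mod N) i * c ((s + k) mod N) j * inner (y t i) (y s j))
      = (\<Sum>t<N. \<Sum>s<N. G ((t + k) mod N) ((s + k) mod N))"
    unfolding swap G_def
  proof (intro sum.cong refl)
    fix t s i j assume "t \<in> {..<N}" "s \<in> {..<N}" "i \<in> {..<m}" "j \<in> {..<m}"
    then show "c ((t + k) mod N) i * c ((s + k) mod N) j * inner (y t i) (y s j)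
      = c ((t + k) mod N) i * c ((s + k) mod N) j * inner (y ((t + k) mod N) i) (y ((s + k) mod N) j)"
      using st zmod_shift[OF N, of t k s] unfolding stationary_def
      by (metis N lessThan_iff mod_less_divisor)
  qed
  also have "\<dots> = (\<Sum>t<N. \<Sum>s<N. G t s)"
    using sum_shift[OF k, of "\<lambda>t. \<Sum>s<N. G t ((s + k) mod N)"] sum_shift[OF k] by simp
  also have "\<dots> = (\<Sum>t<N. \<Sum>i<m. \<Sum>s<N. \<Sum>j<m. c t i * c s j * inner (y t i) (y s j))"
    unfolding swap G_def ..
  finally show ?thesis .
qed

lemma finite_comps: "finite T \<Longrightarrow> finite (comps m y T)"
proof -
  assume "finite T"
  have "comps m y T \<subseteq> (\<lambda>(t,i). y t i) ` (T \<times> {..<m})" unfolding comps_def by auto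
  then show ?thesis using \<open>finite T\<close> by (meson finite_SigmaI finite_imageI finite_lessThan finite_subset)
qed

lemma split0:
  fixes f :: "nat \<Rightarrow> 'a::comm_monoid_add"
  assumes "0 < N"
  shows "(\<Sum>t<N. f t) = f 0 + (\<Sum>t\<in>{0..<N} - {0}. f t)"
  using assms by (simp add: lessThan_atLeast0 sum.remove)

theorem proposition2:
  fixes y :: "nat \<Rightarrow> nat \<Rightarrow> 'h::real_inner" and m n N :: nat
  assumes "m \<ge> 1" and "n \<ge> 1" and "N > 2 * n"
    and "stationary N m y"
    and "reciprocal N m n y"
  shows "full_rank N m y \<longleftrightarrow> pos_def m (Delta N m y)"
proof -
  have N: "0 < N" using assms by simp
  define S where "S = comps m y ({0..<N} - {0})"
  have finS: "finite S" unfolding S_def by (rule finite_comps) simp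
  define v where "v c = (\<Sum>t<N. \<Sum>i<m. c t i *\<^sub>R y t i)" for c
  have Q: "(\<Sum>t<N. \<Sum>i<m. \<Sum>s<N. \<Sum>j<m. c t i * c s j * inner (y t i) (y s j)) = inner (v c) (v c)" for c
    unfolding v_def by (rule quad_eq)
  have D: "(\<Sum>i<m. \<Sum>j<m. c i * c j * Delta N m y i j)
      = inner (\<Sum>i<m. c i *\<^sub>R y 0 i - c i *\<^sub>R proj S (y 0 i)) (\<Sum>i<m. c i *\<^sub>R y 0 i - c i *\<^sub>R proj S (y 0 i))" for c
    unfolding Delta_def quad_eq1 conj_proc_def S_def by (simp add: scaleR_diff_right)
  have Pspan: "(\<Sum>i<m. c i *\<^sub>R proj S (y 0 i)) \<in> span S" for c
    using proj_props(1)[OF finS] by (intro span_sum span_mul) auto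
  have vsplit: "v c = (\<Sum>i<m. c 0 i *\<^sub>R y 0 i) + (\<Sum>t\<in>{0..<N} - {0}. \<Sum>i<m. c t i *\<^sub>R y t i)" for c
    unfolding v_def by (rule split0[OF N])
  show ?thesis
  proof
    assume fr: "full_rank N m y"
    show "pos_def m (Delta N m y)"
      unfolding pos_def_def
    proof (intro allI impI)
      fix c :: "nat \<Rightarrow> real" assume ex: "\<exists>i<m. c i \<noteq> 0"
      define u where "u = (\<Sum>i<m. c i *\<^sub>R y 0 i - c i *\<^sub>R proj S (y 0 i))"
      show "(\<Sum>i<m. \<Sum>j<m. c i * c j * Delta N m y i j) > 0"
      proof (rule ccontr)
        assume "\<not> ?thesis"
        then have "inner u u \<le> 0" unfolding D u_def by simp
        then have u0: "u = 0" by (meson inner_ge_zero order_antisym inner_eq_zero_iff)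
        then have "(\<Sum>i<m. c i *\<^sub>R y 0 i) = (\<Sum>i<m. c i *\<^sub>R proj S (y 0 i))"
          unfolding u_def by (simp add: sum_subtractf)
        then have "(\<Sum>i<m. c i *\<^sub>R y 0 i) \<in> span S" using Pspan by simp
        then obtain a where a: "(\<Sum>i<m. c i *\<^sub>R y 0 i) = (\<Sum>t\<in>{0..<N} - {0}. \<Sum>i<m. a t i *\<^sub>R y t i)"
          using span_comps[of "{0..<N} - {0}"] unfolding S_def by blast
        define C where "C t i = (if t = 0 then c i else - a t i)" for t i
        have "v C = (\<Sum>i<m. c i *\<^sub>R y 0 i) + (\<Sum>t\<in>{0..<N} - {0}. \<Sum>i<m. (- a t i) *\<^sub>R y t i)"
          unfolding vsplit C_def by simp
        also have "\<dots> = 0" unfolding a by (simp add: sum_negf)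
        finally have "v C = 0" .
        moreover have "\<exists>t<N. \<exists>i<m. C t i \<noteq> 0" using ex N unfolding C_def by auto
        ultimately show False using fr unfolding full_rank_def Q by auto
      qed
    qed
  next
    assume pd: "pos_def m (Delta N m y)"
    show "full_rank N m y"
      unfolding full_rank_def
    proof (intro allI impI)
      fix c :: "nat \<Rightarrow> nat \<Rightarrow> real" assume "\<exists>t<N. \<exists>i<m. c t i \<noteq> 0"
      then obtain t0 i0 where t0: "t0 < N" "i0 < m" "c t0 i0 \<noteq> 0" by blast
      show "(\<Sum>t<N. \<Sum>i<m. \<Sum>s<N. \<Sum>j<m. c t i * c s j * inner (y t i) (y s j)) > 0"
      proof (rule ccontr)
        assume "\<not> ?thesis"
        then have "inner (v c) (v c) \<le> 0" unfolding Q by simp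
        then have "inner (v c) (v c) = 0" by (meson inner_ge_zero order_antisym)
        define c' where "c' t i = c ((t + t0) mod N) i" for t i
        have "inner (v c') (v c') = inner (v c) (v c)"
          using quad_shift[OF assms(4) t0(1), of c] unfolding Q c'_def .
        then have "v c' = 0" using \<open>inner (v c) (v c) = 0\<close> by simp
        define w where "w = (\<Sum>i<m. c' 0 i *\<^sub>R y 0 i)"
        define R where "R = (\<Sum>t\<in>{0..<N} - {0}. \<Sum>i<m. c' t i *\<^sub>R y t i)"
        have "R \<in> span S"
          unfolding R_def S_def comps_def
          by (intro span_sum span_mul span_base) blast
        moreover have "w = - R" using \<open>v c' = 0\<close> unfolding vsplit w_def R_def
          by (simp add: eq_neg_iff_add_eq_0)
        ultimately have wS: "w \<in> span S" by (simp add: span_neg)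
        define u where "u = (\<Sum>i<m. c' 0 i *\<^sub>R y 0 i - c' 0 i *\<^sub>R proj S (y 0 i))"
        have uw: "u = w - (\<Sum>i<m. c' 0 i *\<^sub>R proj S (y 0 i))"
          unfolding u_def w_def by (simp add: sum_subtractf)
        have uS: "u \<in> span S" unfolding uw using wS Pspan by (simp add: span_diff)
        have "inner u z = 0" if "z \<in> span S" for z
        proof -
          have "u = (\<Sum>i<m. c' 0 i *\<^sub>R (y 0 i - proj S (y 0 i)))"
            unfolding u_def by (simp add: scaleR_diff_right)
          then have "inner u z = (\<Sum>i<m. c' 0 i * inner (y 0 i - proj S (y 0 i)) z)"
            by (simp add: inner_sum_left)
          also have "\<dots> = 0" using proj_props(2)[OF finS that] by simp
          finally show ?thesis .
        qed
        then have "inner u u = 0" using uS by blast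
        moreover have "(\<Sum>i<m. \<Sum>j<m. c' 0 i * c' 0 j * Delta N m y i j) > 0"
          using pd t0 unfolding pos_def_def c'_def by auto
        ultimately show False unfolding D u_def by simp
      qed
    qed
  qed
qed

end
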